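(* For every odd $n\ge 1$, the permutation $\zeta_n$, which has length $(n^2+1)/2$, contains a subsequence order-isomorphic to every permutation of length $n$.
   Context: The word $z_n$ is the concatenation of $n$ runs $r_1\cdots r_n$, where for odd $k$, $r_k$ lists the odd integers in $[n]$ increasingly and for even $k$, $r_k$ lists the even integers in $[n]$ decreasingly. The permutation $\zeta_n$ of length $|z_n|$ is the unique permutation such that for $i\ne j$: $\zeta_n(i)>\zeta_n(j)$ iff either $z_n(i)>z_n(j)$, or $z_n(i)=z_n(j)$ and $i<j$. Words $u,v$ of length $k$ are order-isomorphic if $u(i)>u(j)\iff v(i)>v(j)$ for all $i,j\in[k]$. *)

theory Defs
  imports Main "HOL-Library.Sublist"
begin

definition zrun :: "nat \<Rightarrow> nat \<Rightarrow> nat list" where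
  "zrun n k = (if odd k then filter odd [1..<n+1] else rev (filter even [1..<n+1]))"

definition zword :: "nat \<Rightarrow> nat list" where
  "zword n = concat (map (zrun n) [1..<n+1])"

definition is_perm :: "nat \<Rightarrow> nat list \<Rightarrow> bool" where
  "is_perm m p \<longleftrightarrow> distinct p \<and> set p = {1..m}"

definition zeta :: "nat \<Rightarrow> nat list" where
  "zeta n = (THE p. is_perm (length (zword n)) p \<and>
     (\<forall>i < length (zword n). \<forall>j < length (zword n). i \<noteq> j \<longrightarrow>
        (p ! i > p ! j \<longleftrightarrow>
           (zword n ! i > zword n ! j \<or> (zword n ! i = zword n ! j \<and> i < j)))))"

definition order_iso :: "nat list \<Rightarrow> nat list \<Rightarrow> bool" where
  "order_iso u v \<longleftrightarrow> length u = length v \<and>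
     (\<forall>i < length u. \<forall>j < length u. (u ! i > u ! j \<longleftrightarrow> v ! i > v ! j))"

end

theory Submission
  imports Defs
begin


lemma discrete_ivt:
  assumes "P u" "\<not> P x" "u < x"
  shows "\<exists>c. u \<le> c \<and> c < x \<and> P c \<and> \<not> P (Suc c)"
  using assms
proof (induction x)
  case 0 then show ?case by simp
next
  case (Suc x)
  show ?case
  proof (cases "P x")
    case True then show ?thesis using Suc.prems by (intro exI[of _ x]) auto
  next
    case False
    have "u \<noteq> x" using Suc.prems False by auto
    with Suc.prems have "u < x" by auto
    from Suc.IH[OF Suc.prems(1) False this] show ?thesis by auto
  qed
qed

lemma aux_minus: "0 < (a::nat) \<Longrightarrow> a < x \<Longrightarrow> a - 1 < x - 1" by arith

lemma subseq_map_nth: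
  "sorted_wrt (<) idx \<Longrightarrow> (\<forall>i\<in>set idx. i < length xs) \<Longrightarrow> subseq (map ((!) xs) idx) xs"
proof (induction xs arbitrary: idx)
  case Nil then show ?case by (cases idx) auto
next
  case (Cons x xs)
  have sh: "map ((!) (x # xs)) js = map ((!) xs) (map (\<lambda>j. j - 1) js)" if "\<forall>j\<in>set js. 0 < j" for js
    using that by (auto simp: nth_Cons')
  have so: "sorted_wrt (<) (map (\<lambda>j. j - 1) js)" if "\<forall>j\<in>set js. 0 < j" "sorted_wrt (<) js" for js :: "nat list"
    using that proof (induction js) case (Cons a js) then show ?case by (simp, meson aux_minus[unfolded One_nat_def]) qed simp
  have bd: "\<forall>i\<in>set (map (\<lambda>j. j - 1) js). i < length xs" if "\<forall>j\<in>set js. 0 < j" "\<forall>i\<in>set js. i < length (x#xs)" for js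
    using that by auto
  show ?case
  proof (cases idx)
    case Nil then show ?thesis by simp
  next
    case (Cons i js)
    show ?thesis
    proof (cases i)
      case 0
      have pos: "\<forall>j\<in>set js. 0 < j" using Cons.prems \<open>idx = i # js\<close> 0 by auto
      have "subseq (map ((!) xs) (map (\<lambda>j. j - 1) js)) xs"
        using Cons.IH[OF so[OF pos] bd[OF pos]] Cons.prems \<open>idx = i # js\<close> by auto
      moreover have "map ((!) (x#xs)) idx = x # map ((!) xs) (map (\<lambda>j. j - 1) js)"
        using \<open>idx = i # js\<close> 0 sh[OF pos] by simp
      ultimately show ?thesis by simp
    next
      case (Suc i')
      have pos: "\<forall>j\<in>set idx. 0 < j" using Cons.prems \<open>idx = i # js\<close> Suc by auto
      have "subseq (map ((!) xs) (map (\<lambda>j. j - 1) idx)) xs"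
        using Cons.IH[OF so[OF pos] bd[OF pos]] Cons.prems by auto
      then have "subseq (map ((!) (x#xs)) idx) xs" by (simp only: sh[OF pos])
      then show ?thesis by (rule list_emb_Cons)
    qed
  qed
qed

definition below :: "nat list \<Rightarrow> nat \<Rightarrow> nat \<Rightarrow> bool" where
  "below z j i \<longleftrightarrow> z!j < z!i \<or> (z!j = z!i \<and> i < j)"

lemma perm_len: "is_perm L p \<Longrightarrow> length p = L"
  unfolding is_perm_def by (metis card_atLeastAtMost diff_Suc_1 distinct_card)

lemma perm_rank:
  assumes "is_perm L p" "i < L"
  shows "p!i = Suc (card {j. j < L \<and> p!j < p!i})"
proof -
  have len: "length p = L" using perm_len assms(1) .
  have inj: "inj_on ((!) p) {..<L}" using assms(1) len unfolding is_perm_def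
    by (simp add: inj_on_nth)
  have img: "(!) p ` {..<L} = {1..L}" using assms(1) len unfolding is_perm_def
    by (metis atLeast0LessThan image_set map_nth set_upt)
  have pi: "p!i \<in> {1..L}" using img assms(2) by auto
  have "(!) p ` {j. j < L \<and> p!j < p!i} = {1..<p!i}"
  proof
    show "(!) p ` {j. j < L \<and> p!j < p!i} \<subseteq> {1..<p!i}" using img by force
    show "{1..<p!i} \<subseteq> (!) p ` {j. j < L \<and> p!j < p!i}"
    proof
      fix v assume v: "v \<in> {1..<p!i}"
      then have "v \<in> {1..L}" using pi by auto
      then obtain j where "j < L" "p!j = v" using img by (metis imageE lessThan_iff)
      then show "v \<in> (!) p ` {j. j < L \<and> p!j < p!i}" using v by auto
    qed
  qed
  moreover have "card ((!) p ` {j. j < L \<and> p!j < p!i}) = card {j. j < L \<and> p!j < p!i}"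
    by (rule card_image) (rule inj_on_subset[OF inj], auto)
  ultimately show ?thesis using pi by auto
qed

lemma below_trans: "below z j i \<Longrightarrow> below z i k \<Longrightarrow> below z j k"
  unfolding below_def by auto

lemma below_irrefl: "\<not> below z i i" unfolding below_def by auto

lemma below_total: "i \<noteq> j \<Longrightarrow> below z i j \<or> below z j i"
  unfolding below_def by auto

definition rk :: "nat list \<Rightarrow> nat \<Rightarrow> nat" where
  "rk z i = Suc (card {j. j < length z \<and> below z j i})"

lemma rk_less: assumes "below z j i" "j < length z" shows "rk z j < rk z i"
proof -
  have "{x. x < length z \<and> below z x j} \<subset> {x. x < length z \<and> below z x i}"
    using assms below_trans below_irrefl by blast
  then show ?thesis unfolding rk_def by (simp add: psubset_card_mono)
qed

lemma rk_range: assumes "i < length z" shows "rk z i \<in> {1..length z}"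
proof -
  have "{j. j < length z \<and> below z j i} \<subseteq> {..<length z} - {i}" using below_irrefl by auto
  then have "card {j. j < length z \<and> below z j i} \<le> card ({..<length z} - {i})"
    by (intro card_mono) auto
  also have "\<dots> = length z - 1" using assms by simp
  finally show ?thesis unfolding rk_def using assms by auto
qed

lemma zeta_char:
  "is_perm (length (zword n)) (zeta n) \<and>
     (\<forall>i < length (zword n). \<forall>j < length (zword n). i \<noteq> j \<longrightarrow>
        (zeta n ! i > zeta n ! j \<longleftrightarrow>
           (zword n ! i > zword n ! j \<or> (zword n ! i = zword n ! j \<and> i < j))))"
proof -
  let ?z = "zword n" let ?L = "length (zword n)"
  let ?q = "map (rk ?z) [0..<?L]"
  let ?P = "\<lambda>p. is_perm ?L p \<and>
     (\<forall>i < ?L. \<forall>j < ?L. i \<noteq> j \<longrightarrow>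
        (p ! i > p ! j \<longleftrightarrow> (?z ! i > ?z ! j \<or> (?z ! i = ?z ! j \<and> i < j))))"
  have cmp: "rk ?z i > rk ?z j \<longleftrightarrow> below ?z j i" if "i < ?L" "j < ?L" "i \<noteq> j" for i j
    using rk_less below_total that by (metis less_asym)
  have dist: "distinct ?q"
  proof (unfold distinct_conv_nth, intro allI impI)
    fix i j assume "i < length ?q" "j < length ?q" "i \<noteq> j"
    then have "i < ?L" "j < ?L" by auto
    then show "?q!i \<noteq> ?q!j" using cmp[of i j] cmp[of j i] below_total[OF \<open>i \<noteq> j\<close>, of ?z] \<open>i \<noteq> j\<close>
      by auto
  qed
  have "set ?q \<subseteq> {1..?L}" using rk_range by auto
  moreover have "card (set ?q) = ?L" using distinct_card[OF dist] by simp
  ultimately have "set ?q = {1..?L}" by (intro card_subset_eq) auto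
  then have Pq: "?P ?q" using dist cmp unfolding is_perm_def below_def by auto
  have uniq: "p = ?q" if "?P p" for p
  proof (rule nth_equalityI)
    have lp: "length p = ?L" using that perm_len by blast
    then show "length p = length ?q" by simp
    fix i assume "i < length p"
    then have i: "i < ?L" using lp by simp
    have "{j. j < ?L \<and> p!j < p!i} = {j. j < ?L \<and> below ?z j i}"
      using that i below_irrefl unfolding below_def by (auto, metis less_irrefl)
    then show "p!i = ?q!i" using perm_rank[of ?L p i] that i by (simp add: rk_def)
  qed
  have "zeta n = ?q" unfolding zeta_def by (rule the_equality) (use Pq uniq in auto)
  then show ?thesis using Pq by simp
qed




lemma filt_odd: "filter odd [1..<n+1] = map (\<lambda>i. 2*i+1) [0..<(n+1) div 2]"
proof (induction n)
  case 0 then show ?case by simp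
next
  case (Suc n)
  have e: "filter odd [1..<Suc n+1] = filter odd [1..<n+1] @ filter odd [Suc n]" by simp
  show ?case
  proof (cases "even n")
    case True
    then obtain j where j: "n = 2*j" by blast
    have "(Suc n + 1) div 2 = Suc ((n+1) div 2)" "(n+1) div 2 = j" using j by simp_all
    then show ?thesis using e Suc.IH j by simp
  next
    case False
    then obtain j where j: "n = 2*j+1" by (blast elim: oddE)
    have "(Suc n + 1) div 2 = (n+1) div 2" using j by simp
    then show ?thesis using e Suc.IH j by simp
  qed
qed

lemma filt_even: "filter even [1..<n+1] = map (\<lambda>i. 2*i+2) [0..<n div 2]"
proof (induction n)
  case 0 then show ?case by simp
next
  case (Suc n)
  have e: "filter even [1..<Suc n+1] = filter even [1..<n+1] @ filter even [Suc n]" by simp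
  show ?case
  proof (cases "even n")
    case True
    then obtain j where j: "n = 2*j" by blast
    have "Suc n div 2 = n div 2" using j by simp
    then show ?thesis using e Suc.IH j by simp
  next
    case False
    then obtain j where j: "n = 2*j+1" by (blast elim: oddE)
    have "Suc n div 2 = Suc (n div 2)" "n div 2 = j" using j by simp_all
    then show ?thesis using e Suc.IH j by simp
  qed
qed
lemma zrun_len: "length (zrun n r) = (if odd r then (n+1) div 2 else n div 2)"
  by (simp only: zrun_def filt_odd filt_even) simp

lemma zrun_nth_odd: "odd r \<Longrightarrow> i < (n+1) div 2 \<Longrightarrow> zrun n r ! i = 2*i+1"
  by (simp only: zrun_def filt_odd) simp

lemma zrun_nth_even: "even r \<Longrightarrow> i < n div 2 \<Longrightarrow> zrun n r ! i = 2*(n div 2 - 1 - i)+2"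
  by (simp only: zrun_def filt_even) (simp add: rev_nth)

definition S :: "nat \<Rightarrow> nat \<Rightarrow> nat" where
  "S n r = length (concat (map (zrun n) [1..<r]))"

lemma S_Suc: "1 \<le> r \<Longrightarrow> S n (Suc r) = S n r + length (zrun n r)"
  by (simp add: S_def)

lemma S_mono: assumes "1 \<le> r" "r \<le> r'" shows "S n r \<le> S n r'"
  using assms(2)
proof (induction r' rule: dec_induct)
  case base then show ?case by simp
next
  case (step m) then show ?case using S_Suc[of m n] assms(1) by simp
qed

lemma len_zword: "length (zword n) = S n (n+1)"
  by (simp add: S_def zword_def)

lemma zword_nth:
  assumes "1 \<le> r" "r \<le> n" "i < length (zrun n r)"
  shows "zword n ! (S n r + i) = zrun n r ! i"
proof -
  have "[1..<n+1] = [1..<r] @ [r..<n+1]" using upt_add_eq_append[of 1 r "n+1-r"] assms by simp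
  also have "[r..<n+1] = r # [Suc r..<n+1]" using assms by (simp add: upt_conv_Cons)
  finally have "zword n = concat (map (zrun n) [1..<r]) @ zrun n r @ concat (map (zrun n) [Suc r..<n+1])"
    by (simp add: zword_def)
  then show ?thesis using assms(3) by (simp add: S_def nth_append)
qed

lemma S_closed: "1 \<le> r \<Longrightarrow> S n r = (r div 2)*((n+1) div 2) + ((r-1) div 2)*(n div 2)"
proof (induction r rule: dec_induct)
  case base then show ?case by (simp add: S_def)
next
  case (step m)
  show ?case
  proof (cases "odd m")
    case True
    then obtain b where b: "m = 2*b+1" by (blast elim: oddE)
    show ?thesis using step S_Suc[of m n] zrun_len[of n m] b by (simp add: algebra_simps)
  next
    case False
    then obtain b where b: "m = 2*b" by blast
    with step obtain c where c: "b = Suc c" by (cases b) auto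
    show ?thesis using step S_Suc[of m n] zrun_len[of n m] b c by (simp add: algebra_simps)
  qed
qed

lemma len_zword_closed: assumes "odd n" shows "length (zword n) = (n^2+1) div 2"
proof -
  obtain e where e: "n = 2*e+1" using assms oddE by blast
  have "length (zword n) = (e+1)*(e+1) + e*e" using S_closed[of "n+1" n] e by (simp add: len_zword)
  moreover have "(n^2+1) div 2 = (e+1)*(e+1) + e*e" using e by (simp add: power2_eq_square algebra_simps)
  ultimately show ?thesis by simp
qed

definition idxr :: "nat \<Rightarrow> nat \<Rightarrow> nat \<Rightarrow> nat" where
  "idxr n r a = (if odd r then (a - 1) div 2 else (n - 1 - a) div 2)"

definition pos :: "nat \<Rightarrow> nat \<Rightarrow> nat \<Rightarrow> nat" where
  "pos n r a = S n r + idxr n r a"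

lemma idxr_ok:
  assumes "odd n" "1 \<le> a" "a \<le> n" "odd r = odd a"
  shows "idxr n r a < length (zrun n r) \<and> zrun n r ! idxr n r a = a"
proof (cases "odd r")
  case True
  then have "odd a" using assms by simp
  then obtain c where c: "a = 2*c+1" using oddE by blast
  have "(a - 1) div 2 < (n+1) div 2" using c assms by auto
  then show ?thesis using True c zrun_nth_odd[of r "(a-1) div 2" n] by (simp add: idxr_def zrun_len)
next
  case False
  then have "even a" using assms by simp
  then obtain c where c: "a = 2*c" using evenE by blast
  obtain e where e: "n = 2*e+1" using assms oddE by blast
  have c1: "1 \<le> c" "c \<le> e" using c e assms by auto
  have i: "(n - 1 - a) div 2 = e - c" using c e by simp
  have "e - c < n div 2" using c1 e by simp
  moreover have "2*(n div 2 - 1 - (e - c))+2 = a" using c1 c e by simp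
  ultimately show ?thesis using False i zrun_nth_even[of r "e - c" n] by (simp add: idxr_def zrun_len)
qed

lemma pos_ok:
  assumes "odd n" "1 \<le> r" "r \<le> n" "1 \<le> a" "a \<le> n" "odd r = odd a"
  shows "pos n r a < length (zword n) \<and> zword n ! pos n r a = a \<and> pos n r a < S n (Suc r)"
proof -
  note ok = idxr_ok[OF assms(1,4,5,6)]
  have "pos n r a < S n (Suc r)" using ok S_Suc[OF assms(2)] by (simp add: pos_def)
  moreover have "S n (Suc r) \<le> length (zword n)" using S_mono[of "Suc r" "n+1" n] assms by (simp add: len_zword)
  moreover have "zword n ! pos n r a = a" using zword_nth[OF assms(2,3)] ok by (simp add: pos_def)
  ultimately show ?thesis by simp
qed




definition st :: "nat \<Rightarrow> nat \<Rightarrow> nat" where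
  "st a b = (if odd a \<noteq> odd b then 1 else if (odd a \<and> a < b) \<or> (even a \<and> b < a) then 0 else 2)"

definition ini :: "nat \<Rightarrow> nat" where "ini a = (if odd a then 1 else 2)"

definition RR :: "nat list \<Rightarrow> nat \<Rightarrow> nat" where
  "RR w k = ini (w!0) + (\<Sum>j<k. st (w!j) (w!Suc j))"

lemma RR_0: "RR w 0 = ini (w!0)" by (simp add: RR_def)
lemma RR_Suc: "RR w (Suc k) = RR w k + st (w!k) (w!Suc k)" by (simp add: RR_def)

lemma RR_parity: "odd (RR w k) = odd (w!k)"
  by (induction k) (auto simp: RR_0 RR_Suc ini_def st_def)

lemma RR_ge1: "1 \<le> RR w k"
  by (induction k) (auto simp: RR_0 RR_Suc ini_def)

lemma RR_mono: "k \<le> k' \<Longrightarrow> RR w k \<le> RR w k'"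
  by (rule lift_Suc_mono_le[of "RR w"]) (auto simp: RR_Suc)

lemma pos_step:
  assumes "odd n" "1 \<le> r" "r + st a b \<le> n" "1 \<le> a" "a \<le> n" "1 \<le> b" "b \<le> n" "odd r = odd a"
  shows "pos n r a < pos n (r + st a b) b"
proof (cases "st a b = 0")
  case True
  then have par: "odd a = odd b" and dir: "(odd a \<and> a < b) \<or> (even a \<and> b < a)"
    by (auto simp: st_def split: if_splits)
  show ?thesis
  proof (cases "odd r")
    case True
    then have "odd a" "odd b" "a < b" using par dir assms by auto
    then have "(a - 1) div 2 < (b - 1) div 2" by (auto elim!: oddE)
    then show ?thesis using True \<open>st a b = 0\<close> by (simp add: pos_def idxr_def)
  next
    case False
    then have "even a" "even b" "b < a" using par dir assms by auto
    obtain e where e: "n = 2*e+1" using assms(1) by (blast elim: oddE)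
    obtain c where c: "a = 2*c" using \<open>even a\<close> by blast
    obtain d where d: "b = 2*d" using \<open>even b\<close> by blast
    have "d < c" "c \<le> e" using c d e \<open>b < a\<close> assms(5) by auto
    moreover have "(n - 1 - a) div 2 = e - c" "(n - 1 - b) div 2 = e - d" using c d e by simp_all
    ultimately have "(n - 1 - a) div 2 < (n - 1 - b) div 2" by simp
    then show ?thesis using False \<open>st a b = 0\<close> by (simp add: pos_def idxr_def)
  qed
next
  case False
  have "pos n r a < S n (Suc r)" using pos_ok[OF assms(1,2) _ assms(4,5,8)] assms(3) by simp
  also have "S n (Suc r) \<le> S n (r + st a b)" using False by (intro S_mono) auto
  also have "\<dots> \<le> pos n (r + st a b) b" by (simp add: pos_def)
  finally show ?thesis .
qed

lemma zeta_len: "length (zeta n) = length (zword n)"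
  using zeta_char[of n] perm_len by blast

lemma embed:
  assumes n: "odd n" and lw: "length w = n"
    and rng: "\<forall>k<n. 1 \<le> w!k \<and> w!k \<le> n"
    and R: "RR w (n-1) \<le> n"
    and lp: "length \<pi> = n"
    and std: "\<forall>k<n. \<forall>l<n. k \<noteq> l \<longrightarrow> (\<pi>!k > \<pi>!l \<longleftrightarrow> w!k > w!l \<or> (w!k = w!l \<and> k < l))"
  shows "\<exists>s. subseq s (zeta n) \<and> order_iso s \<pi>"
proof -
  define f where "f k = pos n (RR w k) (w!k)" for k
  have Rk: "1 \<le> RR w k \<and> RR w k \<le> n" if "k < n" for k
    using RR_ge1 RR_mono[of k "n-1" w] R that by force
  have fok: "f k < length (zword n) \<and> zword n ! f k = w!k" if "k < n" for k
    using pos_ok[OF n, of "RR w k" "w!k"] Rk[OF that] rng that RR_parity by (simp add: f_def)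
  have fstep: "f k < f (Suc k)" if "Suc k < n" for k
  proof -
    have "f k < pos n (RR w k + st (w!k) (w!Suc k)) (w!Suc k)"
      unfolding f_def
      by (rule pos_step[OF n]) (use Rk[of k] Rk[of "Suc k"] rng RR_parity that in \<open>auto simp: RR_Suc\<close>)
    then show ?thesis by (simp add: f_def RR_Suc)
  qed
  have fmono: "f i < f j" if "i < j" "j < n" for i j
  proof -
    have "\<And>k. k \<in> {..<n-1} \<Longrightarrow> f k < f (Suc k)" using fstep by auto
    moreover have "{i..<j} \<subseteq> {..<n-1}" using that by (auto simp: less_diff_conv)
    ultimately show ?thesis using lift_Suc_mono_less_ivl[of "{..<n-1}" f i j] that by blast
  qed
  have fmono_iff: "f i < f j \<longleftrightarrow> i < j" if "i < n" "j < n" for i j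
    using fmono that by (metis less_asym nat_neq_iff)
  define idx where "idx = map f [0..<n]"
  define s where "s = map ((!) (zeta n)) idx"
  have "sorted_wrt (<) idx" unfolding idx_def sorted_wrt_map
    by (auto simp: sorted_wrt_iff_nth_less fmono)
  moreover have "\<forall>i\<in>set idx. i < length (zeta n)" using fok by (auto simp: idx_def zeta_len)
  ultimately have "subseq s (zeta n)" unfolding s_def by (rule subseq_map_nth)
  moreover have "order_iso s \<pi>"
    unfolding order_iso_def
  proof (intro conjI allI impI)
    show "length s = length \<pi>" using lp by (simp add: s_def idx_def)
    fix i j assume ij: "i < length s" "j < length s"
    then have i: "i < n" and j: "j < n" by (auto simp: s_def idx_def)
    have si: "s!i = zeta n ! f i" "s!j = zeta n ! f j" using i j by (auto simp: s_def idx_def)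
    show "s!i > s!j \<longleftrightarrow> \<pi>!i > \<pi>!j"
    proof (cases "i = j")
      case True then show ?thesis by simp
    next
      case False
      then have "f i \<noteq> f j" using fmono_iff i j by (metis nat_neq_iff)
      then have "zeta n ! f i > zeta n ! f j \<longleftrightarrow>
          (zword n ! f i > zword n ! f j \<or> (zword n ! f i = zword n ! f j \<and> f i < f j))"
        using zeta_char[of n] fok i j by blast
      also have "\<dots> \<longleftrightarrow> w!i > w!j \<or> (w!i = w!j \<and> i < j)" using fok i j fmono_iff by auto
      also have "\<dots> \<longleftrightarrow> \<pi>!i > \<pi>!j" using std i j False by auto
      finally show ?thesis using si by simp
    qed
  qed
  ultimately show ?thesis by blast
qed




lemma perm_facts:
  assumes "is_perm n \<pi>"
  shows "length \<pi> = n" "\<And>k. k < n \<Longrightarrow> 1 \<le> \<pi>!k \<and> \<pi>!k \<le> n"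
        "\<And>v. 1 \<le> v \<Longrightarrow> v \<le> n \<Longrightarrow> \<exists>i<n. \<pi>!i = v"
        "\<And>i j. i < n \<Longrightarrow> j < n \<Longrightarrow> \<pi>!i = \<pi>!j \<Longrightarrow> i = j"
proof -
  show l: "length \<pi> = n" using perm_len[OF assms] .
  show "\<And>k. k < n \<Longrightarrow> 1 \<le> \<pi>!k \<and> \<pi>!k \<le> n"
    using assms l unfolding is_perm_def by (metis atLeastAtMost_iff nth_mem)
  show "\<And>v. 1 \<le> v \<Longrightarrow> v \<le> n \<Longrightarrow> \<exists>i<n. \<pi>!i = v"
    using assms l unfolding is_perm_def by (metis atLeastAtMost_iff in_set_conv_nth)
  show "\<And>i j. i < n \<Longrightarrow> j < n \<Longrightarrow> \<pi>!i = \<pi>!j \<Longrightarrow> i = j"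
    using assms l unfolding is_perm_def by (simp add: nth_eq_iff_index_eq)
qed

lemma std_map:
  fixes \<pi> :: "nat list"
  assumes mono: "\<And>x y. x < y \<Longrightarrow> f x \<le> (f y :: nat)"
    and coll: "\<And>k l. k < n \<Longrightarrow> l < n \<Longrightarrow> \<pi>!k < \<pi>!l \<Longrightarrow> f (\<pi>!k) = f (\<pi>!l) \<Longrightarrow> l < k"
    and inj: "\<And>i j. i < n \<Longrightarrow> j < n \<Longrightarrow> \<pi>!i = \<pi>!j \<Longrightarrow> i = j"
  shows "\<forall>k<n. \<forall>l<n. k \<noteq> l \<longrightarrow> (\<pi>!k > \<pi>!l \<longleftrightarrow> f(\<pi>!k) > f(\<pi>!l) \<or> (f(\<pi>!k) = f(\<pi>!l) \<and> k < l))"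
proof (intro allI impI)
  fix k l assume kl: "k < n" "l < n" "k \<noteq> l"
  then have ne: "\<pi>!k \<noteq> \<pi>!l" using inj by blast
  show "\<pi>!k > \<pi>!l \<longleftrightarrow> f(\<pi>!k) > f(\<pi>!l) \<or> (f(\<pi>!k) = f(\<pi>!l) \<and> k < l)"
  proof (cases "\<pi>!k > \<pi>!l")
    case True
    then have "f (\<pi>!l) \<le> f (\<pi>!k)" using mono by blast
    moreover have "f(\<pi>!k) = f(\<pi>!l) \<Longrightarrow> k < l" using coll[of l k] kl True by simp
    ultimately show ?thesis using True by linarith
  next
    case False
    then have lt: "\<pi>!k < \<pi>!l" using ne by simp
    then have "f (\<pi>!k) \<le> f (\<pi>!l)" using mono by blast
    moreover have "f(\<pi>!k) = f(\<pi>!l) \<Longrightarrow> l < k" using coll[of k l] kl lt by simp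
    ultimately show ?thesis using False by auto
  qed
qed

lemma st_shift: "st (Suc a) (Suc b) + st a b = (if a = b then 4 else 2)"
  by (auto simp: st_def)

lemma ini_shift: "ini (Suc a) + ini a = 3"
  by (auto simp: ini_def)

lemma avg:
  assumes "\<forall>k<m. w1!k = Suc (w2!k)" "\<forall>k. Suc k < m \<longrightarrow> w2!k \<noteq> w2!Suc k" "k < m"
  shows "RR w1 k + RR w2 k = 3 + 2*k"
  using assms(3)
proof (induction k)
  case 0 then show ?case using assms(1) ini_shift by (simp add: RR_0)
next
  case (Suc k)
  have "st (w1!k) (w1!Suc k) + st (w2!k) (w2!Suc k) = 2"
    using assms(1,2) Suc.prems st_shift[of "w2!k" "w2!Suc k"] by simp
  then show ?case using Suc by (simp add: RR_Suc)
qed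

lemma caseA:
  assumes perm: "is_perm n \<pi>" and n: "odd n"
    and ij: "i < n" "j < n" "\<pi>!j = Suc (\<pi>!i)" "j < i" "i \<noteq> Suc j"
  shows "\<exists>s. subseq s (zeta n) \<and> order_iso s \<pi>"
proof -
  note pf = perm_facts[OF perm]
  define t where "t = \<pi>!j"
  have t2: "2 \<le> t" using pf(2)[OF ij(1)] ij(3) t_def by simp
  have tn: "t \<le> n" using pf(2)[OF ij(2)] t_def by simp
  have ti: "\<pi>!i = t - 1" using ij(3) t_def by simp
  define f1 where "f1 v = (if v < t then Suc v else v)" for v
  define f2 where "f2 v = (if v < t then v else v - 1)" for v
  define w1 where "w1 = map f1 \<pi>"
  define w2 where "w2 = map f2 \<pi>"
  have c1: "x = t - 1 \<and> y = t" if "x < y" "f1 x = f1 y" for x y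
    using that t2 unfolding f1_def by (auto split: if_splits)
  have c2: "x = t - 1 \<and> y = t" if "x < y" "f2 x = f2 y" for x y
    using that t2 unfolding f2_def by (auto split: if_splits)
  have posn: "k = i \<and> l = j" if "k < n" "l < n" "\<pi>!k = t - 1" "\<pi>!l = t" for k l
    using pf(4)[OF that(1) ij(1)] pf(4)[OF that(2) ij(2)] that ti t_def by simp
  have m1: "f1 x \<le> f1 y" if "x < y" for x y using that unfolding f1_def by auto
  have m2: "f2 x \<le> f2 y" if "x < y" for x y using that unfolding f2_def by auto
  have co1: "l < k" if "k < n" "l < n" "\<pi>!k < \<pi>!l" "f1 (\<pi>!k) = f1 (\<pi>!l)" for k l
    using c1[OF that(3,4)] posn[OF that(1,2)] ij(4) by simp
  have co2: "l < k" if "k < n" "l < n" "\<pi>!k < \<pi>!l" "f2 (\<pi>!k) = f2 (\<pi>!l)" for k l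
    using c2[OF that(3,4)] posn[OF that(1,2)] ij(4) by simp
  note std1 = std_map[of f1 n \<pi>, OF m1 co1 pf(4)]
  note std2 = std_map[of f2 n \<pi>, OF m2 co2 pf(4)]
  have lw1: "length w1 = n" and lw2: "length w2 = n" using pf(1) by (simp_all add: w1_def w2_def)
  have w1n: "w1!k = f1 (\<pi>!k)" if "k < n" for k using that pf(1) by (simp add: w1_def)
  have w2n: "w2!k = f2 (\<pi>!k)" if "k < n" for k using that pf(1) by (simp add: w2_def)
  have rng1: "\<forall>k<n. 1 \<le> w1!k \<and> w1!k \<le> n" using pf(2) w1n tn unfolding f1_def by auto
  have rng2: "\<forall>k<n. 1 \<le> w2!k \<and> w2!k \<le> n" using pf(2) w2n tn t2 unfolding f2_def by fastforce
  have sh: "\<forall>k<n. w1!k = Suc (w2!k)"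
  proof (intro allI impI)
    fix k assume k: "k < n"
    show "w1!k = Suc (w2!k)" using pf(2)[OF k] t2 w1n[OF k] w2n[OF k] unfolding f1_def f2_def by auto
  qed
  have nt: "\<forall>k. Suc k < n \<longrightarrow> w2!k \<noteq> w2!Suc k"
  proof (intro allI impI notI)
    fix k assume k: "Suc k < n" and eq: "w2!k = w2!Suc k"
    then have eq': "f2 (\<pi>!k) = f2 (\<pi>!Suc k)" using w2n by simp
    have ne: "\<pi>!k \<noteq> \<pi>!Suc k" using pf(4)[of k "Suc k"] k by auto
    show False
    proof (cases "\<pi>!k < \<pi>!Suc k")
      case True
      from c2[OF True eq'] posn[of k "Suc k"] k ij(4) show False by simp
    next
      case False
      then have "\<pi>!Suc k < \<pi>!k" using ne by simp
      from c2[OF this eq'[symmetric]] posn[of "Suc k" k] k ij(5) show False by simp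
    qed
  qed
  have s1: "\<forall>k<n. \<forall>l<n. k \<noteq> l \<longrightarrow> (\<pi>!k > \<pi>!l \<longleftrightarrow> w1!k > w1!l \<or> (w1!k = w1!l \<and> k < l))"
  proof (intro allI impI)
    fix k l assume "k < n" "l < n" "k \<noteq> l"
    then show "\<pi>!k > \<pi>!l \<longleftrightarrow> w1!k > w1!l \<or> (w1!k = w1!l \<and> k < l)"
      using std1 w1n[of k] w1n[of l] by presburger
  qed
  have s2: "\<forall>k<n. \<forall>l<n. k \<noteq> l \<longrightarrow> (\<pi>!k > \<pi>!l \<longleftrightarrow> w2!k > w2!l \<or> (w2!k = w2!l \<and> k < l))"
  proof (intro allI impI)
    fix k l assume "k < n" "l < n" "k \<noteq> l"
    then show "\<pi>!k > \<pi>!l \<longleftrightarrow> w2!k > w2!l \<or> (w2!k = w2!l \<and> k < l)"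
      using std2 w2n[of k] w2n[of l] by presburger
  qed
  have "RR w1 (n-1) + RR w2 (n-1) = 3 + 2*(n-1)" using avg[OF sh nt, of "n-1"] ij(1) by simp
  then have "RR w1 (n-1) \<le> n \<or> RR w2 (n-1) \<le> n" using ij(1) by linarith
  then show ?thesis
  proof
    assume "RR w1 (n-1) \<le> n"
    from embed[OF n lw1 rng1 this pf(1) s1] show ?thesis .
  next
    assume "RR w2 (n-1) \<le> n"
    from embed[OF n lw2 rng2 this pf(1) s2] show ?thesis .
  qed
qed

lemma arith_step:
  fixes R b y k :: nat
  assumes "R \<le> Suc k + (if even (Suc k) then 1 else 0)" "odd R = odd b" "b < y"
  shows "R + st b y \<le> Suc (Suc k) + (if even y then 1 else 0)"
  using assms unfolding st_def by presburger

lemma Max_ival: "1 \<le> m \<Longrightarrow> Max {1..m::nat} = m"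
  by (rule Max_eqI) auto

lemma caseB:
  assumes perm: "is_perm n \<pi>" and n: "odd n"
    and lay: "\<forall>i<n. \<forall>j<n. \<pi>!j = Suc (\<pi>!i) \<longrightarrow> j < i \<longrightarrow> i = Suc j"
  shows "RR \<pi> (n-1) \<le> n"
proof -
  note pf = perm_facts[OF perm]
  have n1: "1 \<le> n" using n by (cases n) auto
  have key: "j = k \<and> i = Suc k" if "i < n" "j < n" "\<pi>!j = Suc (\<pi>!i)" "k < i" "j \<le> k" for i j k
  proof -
    have "i = Suc j" using lay that by auto
    then show ?thesis using that by auto
  qed
  have desc: "\<pi>!Suc k = \<pi>!k - 1" if dsm: "Suc k < n" "\<pi>!Suc k < \<pi>!k" for k
  proof -
    let ?P = "\<lambda>v. \<exists>i<n. k < i \<and> \<pi>!i = v"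
    have p1: "?P (\<pi>!Suc k)" using dsm by auto
    have p2: "\<not> ?P (\<pi>!k)"
    proof
      assume "?P (\<pi>!k)"
      then obtain i where "i < n" "k < i" "\<pi>!i = \<pi>!k" by blast
      then show False using pf(4)[of i k] dsm by auto
    qed
    obtain c where c: "\<pi>!Suc k \<le> c" "c < \<pi>!k" "?P c" "\<not> ?P (Suc c)"
      using discrete_ivt[of ?P, OF p1 p2 dsm(2)] by blast
    obtain i where i: "i < n" "k < i" "\<pi>!i = c" using c(3) by blast
    have "1 \<le> Suc c" "Suc c \<le> n" using c(2) pf(2)[of k] dsm by auto
    then obtain j where j: "j < n" "\<pi>!j = Suc c" using pf(3) by blast
    have "j \<le> k" using c(4) j by (meson not_less)
    from key[OF i(1) j(1) _ i(2) this] j(2) i(3) have "j = k" "i = Suc k" by auto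
    then show ?thesis using i(3) j(2) by simp
  qed
  have asc: "(!) \<pi> ` {..k} = {1..Suc k}" if asm: "Suc k < n" "\<pi>!k < \<pi>!Suc k" for k
  proof -
    let ?V = "(!) \<pi> ` {..k}"
    have "inj_on ((!) \<pi>) {..k}" using pf(4) asm(1) by (auto simp: inj_on_def)
    then have cardV: "card ?V = Suc k" by (simp add: card_image)
    have sub: "?V \<subseteq> {1..Suc k}"
    proof
      fix x assume xV: "x \<in> ?V"
      then obtain i where i: "i \<le> k" "\<pi>!i = x" by auto
      have x1: "1 \<le> x" "x \<le> n" using pf(2)[of i] i asm by auto
      show "x \<in> {1..Suc k}"
      proof (rule ccontr)
        assume "x \<notin> {1..Suc k}"
        then have xg: "Suc k < x" using x1 by auto
        have "\<not> {1..Suc k} \<subseteq> ?V"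
        proof
          assume "{1..Suc k} \<subseteq> ?V"
          then have "insert x {1..Suc k} \<subseteq> ?V" using xV by auto
          then have "card (insert x {1..Suc k}) \<le> card ?V" by (intro card_mono) auto
          then show False using xg cardV by simp
        qed
        then obtain u where u: "1 \<le> u" "u \<le> Suc k" "u \<notin> ?V" by (meson atLeastAtMost_iff subsetI)
        obtain c where c: "u \<le> c" "c < x" "c \<notin> ?V" "Suc c \<in> ?V"
          using discrete_ivt[of "\<lambda>v. v \<notin> ?V" u x] u xV xg by auto
        have "1 \<le> c" "c \<le> n" using c u x1 by auto
        then obtain i' where i': "i' < n" "\<pi>!i' = c" using pf(3) by blast
        have ki: "k < i'" using c(3) i' by (metis atMost_iff image_eqI not_less)
        obtain j' where j': "j' \<le> k" "\<pi>!j' = Suc c" using c(4) by auto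
        have "j' < n" using j' asm by auto
        from key[OF i'(1) this _ ki j'(1)] j'(2) i'(2) have "j' = k" "i' = Suc k" by auto
        then show False using asm(2) i'(2) j'(2) by simp
      qed
    qed
    show ?thesis using card_subset_eq[OF _ sub] cardV by simp
  qed
  define M where "M k = Max ((!) \<pi> ` {..k})" for k
  have inv: "RR \<pi> k \<le> Suc k + (if even (M k) then 1 else 0)" if "k < n" for k
    using that
  proof (induction k)
    case 0 then show ?case by (simp add: M_def RR_0 ini_def)
  next
    case (Suc k)
    have IH: "RR \<pi> k \<le> Suc k + (if even (M k) then 1 else 0)" using Suc by simp
    have img: "(!) \<pi> ` {..Suc k} = insert (\<pi>!Suc k) ((!) \<pi> ` {..k})" by (simp add: atMost_Suc)
    show ?case
    proof (cases "\<pi>!Suc k < \<pi>!k")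
      case True
      have d: "\<pi>!Suc k = \<pi>!k - 1" using desc Suc.prems True by blast
      have "1 \<le> \<pi>!Suc k" using pf(2)[of "Suc k"] Suc.prems by simp
      then have "st (\<pi>!k) (\<pi>!Suc k) = 1" using d True by (auto simp: st_def)
      moreover have "M (Suc k) = M k"
      proof -
        have "\<pi>!k \<le> M k" unfolding M_def by (rule Max_ge) auto
        then have "\<pi>!Suc k \<le> M k" using True by simp
        then show ?thesis unfolding M_def img by (simp add: Max_insert max_def)
      qed
      ultimately show ?thesis using IH by (simp add: RR_Suc)
    next
      case False
      have ne: "\<pi>!k \<noteq> \<pi>!Suc k" using pf(4)[of k "Suc k"] Suc.prems by auto
      then have lt: "\<pi>!k < \<pi>!Suc k" using False by simp
      have V: "(!) \<pi> ` {..k} = {1..Suc k}" using asc Suc.prems lt by blast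
      have Mk: "M k = Suc k" using V Max_ival[of "Suc k"] by (simp add: M_def)
      have nin: "\<pi>!Suc k \<notin> (!) \<pi> ` {..k}"
      proof
        assume "\<pi>!Suc k \<in> (!) \<pi> ` {..k}"
        then obtain i where "i \<le> k" "\<pi>!i = \<pi>!Suc k" by auto
        then show False using pf(4)[of i "Suc k"] Suc.prems by auto
      qed
      have y: "Suc k < \<pi>!Suc k" using nin V pf(2)[of "Suc k"] Suc.prems by auto
      have My: "M (Suc k) = \<pi>!Suc k" unfolding M_def img V using y Max_ival[of "Suc k"] by (simp add: Max_insert)
      have par: "odd (RR \<pi> k) = odd (\<pi>!k)" by (rule RR_parity)
      have "RR \<pi> (Suc k) = RR \<pi> k + st (\<pi>!k) (\<pi>!Suc k)" by (simp add: RR_Suc)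
      moreover have IH': "RR \<pi> k \<le> Suc k + (if even (Suc k) then 1 else 0)" using IH Mk by simp
      ultimately show ?thesis using arith_step[OF IH' par lt] My by simp
    qed
  qed
  have e1: "{..n-1} = {..<n}" using n1 by auto
  have "set \<pi> = (!) \<pi> ` {..<n}" using pf(1) by (auto simp: set_conv_nth)
  then have "(!) \<pi> ` {..n-1} = set \<pi>" using e1 by simp
  then have "M (n-1) = n" using perm Max_ival[of n] unfolding is_perm_def M_def using n1 by simp
  then show ?thesis using inv[of "n-1"] n1 n by simp
qed


theorem mainTheorem6:
  fixes n :: nat
  assumes "odd n" and "n \<ge> 1"
  shows "length (zeta n) = (n^2 + 1) div 2 \<and>
         (\<forall>\<pi>. is_perm n \<pi> \<longrightarrow> (\<exists>s. subseq s (zeta n) \<and> order_iso s \<pi>))"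
proof
  show "length (zeta n) = (n^2 + 1) div 2" using zeta_len len_zword_closed[OF assms(1)] by simp
  show "\<forall>\<pi>. is_perm n \<pi> \<longrightarrow> (\<exists>s. subseq s (zeta n) \<and> order_iso s \<pi>)"
  proof (intro allI impI)
    fix \<pi> assume perm: "is_perm n \<pi>"
    note pf = perm_facts[OF perm]
    show "\<exists>s. subseq s (zeta n) \<and> order_iso s \<pi>"
    proof (cases "\<exists>i j. i < n \<and> j < n \<and> \<pi>!j = Suc (\<pi>!i) \<and> j < i \<and> i \<noteq> Suc j")
      case True
      then obtain i j where "i < n" "j < n" "\<pi>!j = Suc (\<pi>!i)" "j < i" "i \<noteq> Suc j" by blast
      from caseA[OF perm assms(1) this] show ?thesis .
    next
      case False
      then have lay: "\<forall>i<n. \<forall>j<n. \<pi>!j = Suc (\<pi>!i) \<longrightarrow> j < i \<longrightarrow> i = Suc j" by blast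
      have R: "RR \<pi> (n-1) \<le> n" by (rule caseB[OF perm assms(1) lay])
      have rng: "\<forall>k<n. 1 \<le> \<pi>!k \<and> \<pi>!k \<le> n" using pf(2) by blast
      have std: "\<forall>k<n. \<forall>l<n. k \<noteq> l \<longrightarrow> (\<pi>!k > \<pi>!l \<longleftrightarrow> \<pi>!k > \<pi>!l \<or> (\<pi>!k = \<pi>!l \<and> k < l))"
        using pf(4) by blast
      from embed[OF assms(1) pf(1) rng R pf(1) std] show ?thesis .
    qed
  qed
qed

end
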